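(* Let $P:\mathbb{R}^d\to\mathbb{R}$ be a positive homogeneous function and let $\mathrm{Sym}(P)=\{O\in\mathrm{End}(\mathbb{R}^d): P(O\xi)=P(\xi)\text{ for all }\xi\in\mathbb{R}^d\}$. Then $\mathrm{Sym}(P)$ is a compact subgroup of the general linear group $\mathrm{GL}(\mathbb{R}^d)$.
   Context: For $E\in\mathrm{End}(\mathbb{R}^d)$ and $t>0$ set $t^E:=\exp(\log(t)E)=\sum_{k\ge 0}\frac{(\log t)^k}{k!}E^k$. A function $P:\mathbb{R}^d\to\mathbb{C}$ is homogeneous with respect to $E$ if $P(t^E\xi)=tP(\xi)$ for all $t>0$, $\xi\in\mathbb{R}^d$; the exponent set $\mathrm{Exp}(P)$ is the set of all such $E$. A real-valued $P$ is positive definite if $P\ge 0$ and $P(\xi)=0$ only when $\xi=0$. A function $P:\mathbb{R}^d\to\mathbb{R}$ is positive homogeneous if it is continuous, positive definite, $\mathrm{Exp}(P)\neq\emptyset$, and its unital level set $S_P=\{\eta\in\mathbb{R}^d:P(\eta)=1\}$ is compact. (Known fact that may be used: a continuous positive definite $P$ with nonempty exponent set is positive homogeneous iff $\lim_{|\xi|\to\infty}P(\xi)=\infty$, iff $\lim_{t\to 0}\|t^E\|=0$ for every $E\in\mathrm{Exp}(P)$.) *)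

theory Defs
  imports "HOL-Analysis.Analysis"
begin

primrec matpow :: "real^'n^'n \<Rightarrow> nat \<Rightarrow> real^'n^'n" where
  "matpow E 0 = mat 1"
| "matpow E (Suc k) = E ** matpow E k"

text \<open>t^E = exp(log(t) E) = sum over k of (log t)^k / k! E^k\<close>
definition tpow :: "real \<Rightarrow> real^'n^'n \<Rightarrow> real^'n^'n" where
  "tpow t E = (\<Sum>k. ((ln t) ^ k / fact k) *\<^sub>R matpow E k)"

definition homogeneous_wrt :: "(real^'n \<Rightarrow> real) \<Rightarrow> real^'n^'n \<Rightarrow> bool" where
  "homogeneous_wrt P E \<longleftrightarrow> (\<forall>t>0. \<forall>\<xi>. P (tpow t E *v \<xi>) = t * P \<xi>)"

definition Exp :: "(real^'n \<Rightarrow> real) \<Rightarrow> (real^'n^'n) set" where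
  "Exp P = {E. homogeneous_wrt P E}"

definition positive_definite :: "(real^'n \<Rightarrow> real) \<Rightarrow> bool" where
  "positive_definite P \<longleftrightarrow> (\<forall>\<xi>. P \<xi> \<ge> 0) \<and> (\<forall>\<xi>. P \<xi> = 0 \<longrightarrow> \<xi> = 0)"

definition positive_homogeneous :: "(real^'n \<Rightarrow> real) \<Rightarrow> bool" where
  "positive_homogeneous P \<longleftrightarrow> continuous_on UNIV P \<and> positive_definite P
     \<and> Exp P \<noteq> {} \<and> compact {\<eta>. P \<eta> = 1}"

definition Sym :: "(real^'n \<Rightarrow> real) \<Rightarrow> (real^'n^'n) set" where
  "Sym P = {M. \<forall>\<xi>. P (M *v \<xi>) = P \<xi>}"

end

theory Submission
  imports Defs
begin

lemma cont_mv: "continuous_on UNIV (\<lambda>M::real^'n^'m. M *v x)"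
proof -
  have "linear (\<lambda>M::real^'n^'m. M *v x)"
  proof (rule linearI)
    fix A B :: "real^'n^'m" and c :: real
    show "(A + B) *v x = A *v x + B *v x" by (rule matrix_vector_mult_add_rdistrib)
    show "(c *\<^sub>R A) *v x = c *\<^sub>R (A *v x)"
      by (simp add: matrix_vector_mult_def vec_eq_iff sum_distrib_left mult.assoc)
  qed
  then have "bounded_linear (\<lambda>M::real^'n^'m. M *v x)"
    using linear_conv_bounded_linear by blast
  then show ?thesis by (simp add: linear_continuous_on)
qed

lemma closed_Sym:
  assumes "continuous_on UNIV P"
  shows "closed (Sym P)"
proof -
  have "Sym P = (\<Inter>\<xi>. {M. P (M *v \<xi>) = P \<xi>})" by (auto simp: Sym_def)
  moreover have "closed {M. P (M *v \<xi>) = P \<xi>}" for \<xi>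
    by (rule closed_Collect_eq) (auto intro: continuous_on_compose2[OF assms cont_mv])
  ultimately show ?thesis by auto
qed

theorem mainTheorem1:
  fixes P :: "real^'n \<Rightarrow> real"
  assumes "positive_homogeneous P"
  shows "compact (Sym P)
    \<and> Sym P \<subseteq> {A. invertible A}
    \<and> mat 1 \<in> Sym P
    \<and> (\<forall>A\<in>Sym P. \<forall>B\<in>Sym P. A ** B \<in> Sym P)
    \<and> (\<forall>A\<in>Sym P. matrix_inv A \<in> Sym P)"
proof -
  have contP: "continuous_on UNIV P" and pd: "positive_definite P"
    and ex: "Exp P \<noteq> {}" and cS: "compact {\<eta>. P \<eta> = 1}"
    using assms by (auto simp: positive_homogeneous_def)
  have Pge: "P x \<ge> 0" for x using pd by (auto simp: positive_definite_def)
  have Pz: "P x = 0 \<Longrightarrow> x = 0" for x using pd by (auto simp: positive_definite_def)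
  obtain E where hE: "\<And>t \<xi>. t > 0 \<Longrightarrow> P (tpow t E *v \<xi>) = t * P \<xi>"
    using ex by (auto simp: Exp_def homogeneous_wrt_def)
  have P0: "P 0 = 0"
    using hE[of 2 0] by simp
  have inv: "invertible A" if A: "A \<in> Sym P" for A
  proof -
    have "x = 0" if "A *v x = 0" for x
    proof -
      have "P (A *v x) = P x" using A by (simp add: Sym_def)
      then show ?thesis using that P0 Pz by simp
    qed
    then have "inj ((*v) A)"
      by (metis (no_types, lifting) injI eq_iff_diff_eq_0 matrix_vector_mult_diff_distrib)
    then show ?thesis
      using matrix_left_invertible_injective invertible_left_inverse by blast
  qed
  have mul: "A ** B \<in> Sym P" if "A \<in> Sym P" "B \<in> Sym P" for A B
    using that by (auto simp: Sym_def simp flip: matrix_vector_mul_assoc)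
  have minv: "matrix_inv A \<in> Sym P" if A: "A \<in> Sym P" for A
  proof -
    have "A ** matrix_inv A = mat 1"
      using inv[OF A] unfolding invertible_def matrix_inv_def by (rule someI_ex[THEN conjunct1])
    then have "A *v (matrix_inv A *v x) = x" for x
      by (simp add: matrix_vector_mul_assoc)
    moreover have "P (A *v y) = P y" for y using A by (simp add: Sym_def)
    ultimately have "P (matrix_inv A *v x) = P x" for x by metis
    then show ?thesis by (simp add: Sym_def)
  qed
  have id: "mat 1 \<in> Sym P" by (simp add: Sym_def)
  obtain i :: 'n where True by blast
  define \<xi>0 :: "real^'n" where "\<xi>0 = axis i 1"
  have "\<xi>0 \<noteq> 0" by (simp add: \<xi>0_def axis_eq_0_iff)
  then have p0: "P \<xi>0 > 0" using Pge Pz by (metis less_eq_real_def)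
  define \<eta>1 where "\<eta>1 = tpow (2 / P \<xi>0) E *v \<xi>0"
  have P\<eta>1: "P \<eta>1 = 2" using hE[of "2 / P \<xi>0" \<xi>0] p0 by (simp add: \<eta>1_def)
  obtain r where r: "r > 0" "\<And>\<eta>. dist \<eta> \<eta>1 < r \<Longrightarrow> dist (P \<eta>) (P \<eta>1) < 1"
    using contP unfolding continuous_on_iff by (metis UNIV_I zero_less_one)
  have rP: "P \<eta> > 1" if "dist \<eta> \<eta>1 < r" for \<eta>
    using r(2)[OF that] P\<eta>1 by (auto simp: dist_real_def)
  obtain \<delta> where d: "\<delta> > 0" "\<And>\<eta>. dist \<eta> 0 < \<delta> \<Longrightarrow> dist (P \<eta>) (P 0) < 1"
    using contP unfolding continuous_on_iff by (metis UNIV_I zero_less_one)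
  have dP: "norm \<eta> \<ge> \<delta>" if "P \<eta> = 1" for \<eta>
    using d(2)[of \<eta>] that P0 by (force simp: dist_real_def)
  obtain R where R: "\<And>\<eta>. P \<eta> = 1 \<Longrightarrow> norm \<eta> \<le> R"
    using compact_imp_bounded[OF cS] unfolding bounded_iff by auto
  define C where "C = R * (norm \<eta>1 + r) / \<delta>"
  have bndB: "norm (M *v \<eta>) \<le> C" if M: "M \<in> Sym P" and \<eta>: "dist \<eta> \<eta>1 < r" for M \<eta>
  proof -
    have c: "continuous_on {0..1} (\<lambda>s::real. P (s *\<^sub>R \<eta>))"
      by (rule continuous_on_compose2[OF contP]) (auto intro!: continuous_intros)
    obtain s where s: "0 \<le> s" "s \<le> 1" "P (s *\<^sub>R \<eta>) = 1"
      using IVT'[of "\<lambda>s::real. P (s *\<^sub>R \<eta>)" 0 1 1] c rP[OF \<eta>] P0 by auto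
    have n1: "norm (s *\<^sub>R \<eta>) \<ge> \<delta>" using dP[OF s(3)] .
    have "P (M *v (s *\<^sub>R \<eta>)) = 1" using M s(3) by (simp add: Sym_def)
    then have n2: "norm (s *\<^sub>R (M *v \<eta>)) \<le> R"
      using R[of "M *v (s *\<^sub>R \<eta>)"] by (simp only: matrix_vector_mult_scaleR)
    have spos: "s > 0" using n1 d(1) s(1) by (cases "s = 0") auto
    have ne: "norm \<eta> \<le> norm \<eta>1 + r"
      using \<eta> norm_triangle_ineq2[of \<eta> \<eta>1] by (simp add: dist_norm)
    have "s * norm \<eta> \<ge> \<delta>" using n1 spos by simp
    then have "\<delta> * norm (M *v \<eta>) \<le> s * norm \<eta> * norm (M *v \<eta>)"
      by (simp add: mult_right_mono)
    also have "\<dots> = norm \<eta> * norm (s *\<^sub>R (M *v \<eta>))" using spos by simp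
    also have "\<dots> \<le> (norm \<eta>1 + r) * R"
      using n2 ne by (meson mult_mono norm_ge_zero order_trans)
    finally show ?thesis using d(1) unfolding C_def by (simp add: field_simps)
  qed
  have colb: "\<bar>M $ k $ j\<bar> \<le> 4 * C / r" if M: "M \<in> Sym P" for M k j
  proof -
    define v :: "real^'n" where "v = (r/2) *\<^sub>R axis j 1"
    have "dist (\<eta>1 + v) \<eta>1 < r" using r(1) by (simp add: v_def dist_norm)
    then have a: "norm (M *v (\<eta>1 + v)) \<le> C" using bndB M by blast
    have b: "norm (M *v \<eta>1) \<le> C" using bndB M r(1) by simp
    have "M *v v = M *v (\<eta>1 + v) - M *v \<eta>1" by (simp add: matrix_vector_right_distrib)
    then have "norm (M *v v) \<le> 2 * C" using a b norm_triangle_ineq4[of "M *v (\<eta>1 + v)" "M *v \<eta>1"] by simp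
    moreover have "M *v v = (r/2) *\<^sub>R (M *v axis j 1)" by (simp add: v_def matrix_vector_mult_scaleR)
    ultimately have "(r/2) * norm (M *v axis j 1) \<le> 2 * C" using r(1) by simp
    then have "norm (M *v axis j 1) \<le> 4 * C / r" using r(1) by (simp add: field_simps)
    moreover have "(M *v axis j 1) $ k = M $ k $ j"
      by (simp add: matrix_vector_mult_basis column_def)
    ultimately show ?thesis by (metis component_le_norm_cart order_trans)
  qed
  have "norm M \<le> real CARD('n) * (real CARD('n) * (4 * C / r))" if M: "M \<in> Sym P" for M
  proof -
    have "norm M \<le> (\<Sum>k\<in>UNIV. norm (M $ k))" by (simp add: norm_vec_def L2_set_le_sum)
    also have "\<dots> \<le> (\<Sum>k\<in>(UNIV::'n set). real CARD('n) * (4 * C / r))"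
    proof (rule sum_mono)
      fix k
      have "norm (M $ k) \<le> (\<Sum>j\<in>UNIV. \<bar>M $ k $ j\<bar>)" by (rule norm_le_l1_cart)
      also have "\<dots> \<le> (\<Sum>j\<in>(UNIV::'n set). 4 * C / r)" by (rule sum_mono) (rule colb[OF M])
      finally show "norm (M $ k) \<le> real CARD('n) * (4 * C / r)" by simp
    qed
    finally show ?thesis by simp
  qed
  then have "bounded (Sym P)" unfolding bounded_iff by blast
  then have "compact (Sym P)" using closed_Sym[OF contP] by (simp add: compact_eq_bounded_closed)
  then show ?thesis using inv mul minv id by blast
qed

end
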